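(* (1) Let $M$ and $M'$ be $R$-modules with $W_R(M)\subseteq W_R(M')$. If $M'$ satisfies the dual of Property $\mathcal{A}$ (respectively, the dual of strong Property $\mathcal{A}$), then $M\oplus M'$ satisfies the dual of Property $\mathcal{A}$ (respectively, the dual of strong Property $\mathcal{A}$). (2) Let $N$ be a small submodule of an $R$-module $M$ (i.e. $X+N=M$ implies $X=M$ for every submodule $X$ of $M$). Then $M$ satisfies the dual of Property $\mathcal{A}$ if and only if $M/N$ does; and $M$ is secondal if and only if $M/N$ is secondal.
   Context: All rings are commutative with identity. For an $R$-module $M$, $W_R(M)=\{r\in R : rM\neq M\}$. An $R$-module $M$ satisfies the dual of Property $\mathcal{A}$ if for every finitely generated ideal $I$ of $R$ with $I\subseteq W_R(M)$ we have $IM\neq M$. A proper submodule $L$ of $M$ is completely irreducible if whenever $L=\bigcap_{i\in I}L_i$ for a family $\{L_i\}_{i\in I}$ of submodules of $M$, then $L=L_i$ for some $i$. An $R$-module $M$ satisfies the dual of strong Property $\mathcal{A}$ if for any $a_1,\dots,a_n\in W_R(M)$ there exists a completely irreducible submodule $L$ of $M$ with $a_iM\subseteq L\neq M$ for all $i=1,\dots,n$. A nonzero $R$-module $N$ is secondal if $W_R(N)$ is an ideal of $R$. *)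

theory Defs
  imports Main HOL.Modules "HOL-Library.Product_Plus"
begin

text \<open>An R-module M is represented by a type 'm::ab_group_add together with a
scalar multiplication s :: 'r \<Rightarrow> 'm \<Rightarrow> 'm satisfying module s, where
'r::comm_ring_1 is the ring R. The module M is the whole type.\<close>

definition W :: "('r::comm_ring_1 \<Rightarrow> 'm::ab_group_add \<Rightarrow> 'm) \<Rightarrow> 'r set" where
  "W s = {r. range (s r) \<noteq> UNIV}"

definition is_ideal :: "'r::comm_ring_1 set \<Rightarrow> bool" where
  "is_ideal I \<longleftrightarrow> 0 \<in> I \<and> (\<forall>a\<in>I. \<forall>b\<in>I. a + b \<in> I) \<and> (\<forall>r. \<forall>a\<in>I. r * a \<in> I)"

definition ideal_gen :: "'r::comm_ring_1 set \<Rightarrow> 'r set" where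
  "ideal_gen A = {\<Sum>a\<in>F. c a * a | F c. finite F \<and> F \<subseteq> A}"

definition fg_ideal :: "'r::comm_ring_1 set \<Rightarrow> bool" where
  "fg_ideal I \<longleftrightarrow> (\<exists>A. finite A \<and> I = ideal_gen A)"

definition ideal_times :: "('r::comm_ring_1 \<Rightarrow> 'm::ab_group_add \<Rightarrow> 'm) \<Rightarrow> 'r set \<Rightarrow> 'm set" where
  "ideal_times s I = module.span s {s r x | r x. r \<in> I}"

definition dual_A :: "('r::comm_ring_1 \<Rightarrow> 'm::ab_group_add \<Rightarrow> 'm) \<Rightarrow> bool" where
  "dual_A s \<longleftrightarrow> (\<forall>I. fg_ideal I \<and> I \<subseteq> W s \<longrightarrow> ideal_times s I \<noteq> UNIV)"

definition completely_irreducible :: "('r::comm_ring_1 \<Rightarrow> 'm::ab_group_add \<Rightarrow> 'm) \<Rightarrow> 'm set \<Rightarrow> bool" where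
  "completely_irreducible s L \<longleftrightarrow> module.subspace s L \<and> L \<noteq> UNIV \<and>
     (\<forall>\<L>. (\<forall>Li\<in>\<L>. module.subspace s Li) \<and> L = \<Inter>\<L> \<longrightarrow> L \<in> \<L>)"

definition dual_strong_A :: "('r::comm_ring_1 \<Rightarrow> 'm::ab_group_add \<Rightarrow> 'm) \<Rightarrow> bool" where
  "dual_strong_A s \<longleftrightarrow> (\<forall>A. finite A \<and> A \<noteq> {} \<and> A \<subseteq> W s \<longrightarrow>
     (\<exists>L. completely_irreducible s L \<and> (\<forall>a\<in>A. range (s a) \<subseteq> L)))"

definition secondal :: "('r::comm_ring_1 \<Rightarrow> 'm::ab_group_add \<Rightarrow> 'm) \<Rightarrow> bool" where
  "secondal s \<longleftrightarrow> (UNIV :: 'm set) \<noteq> {0} \<and> is_ideal (W s)"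

definition dsum_scale :: "('r::comm_ring_1 \<Rightarrow> 'm::ab_group_add \<Rightarrow> 'm) \<Rightarrow> ('r \<Rightarrow> 'n::ab_group_add \<Rightarrow> 'n) \<Rightarrow> 'r \<Rightarrow> 'm \<times> 'n \<Rightarrow> 'm \<times> 'n" where
  "dsum_scale s s' r p = (s r (fst p), s' r (snd p))"

definition small_submodule :: "('r::comm_ring_1 \<Rightarrow> 'm::ab_group_add \<Rightarrow> 'm) \<Rightarrow> 'm set \<Rightarrow> bool" where
  "small_submodule s N \<longleftrightarrow> module.subspace s N \<and>
     (\<forall>X. module.subspace s X \<and> {x + n | x n. x \<in> X \<and> n \<in> N} = UNIV \<longrightarrow> X = UNIV)"

end

theory Submission
  imports Defs
begin

lemma range_subspace:
  assumes "module s" shows "module.subspace s (range (s r))"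
proof -
  interpret module s by fact
  show ?thesis
  proof (rule subspaceI)
    show "0 \<in> range (s r)" by (metis rangeI scale_zero_right)
  next
    fix x y assume "x \<in> range (s r)" "y \<in> range (s r)"
    then obtain a b where "x = s r a" "y = s r b" by blast
    then show "x + y \<in> range (s r)" by (metis rangeI scale_right_distrib)
  next
    fix c x assume "x \<in> range (s r)"
    then obtain a where "x = s r a" by blast
    then show "s c x \<in> range (s r)" by (metis rangeI scale_left_commute)
  qed
qed

lemma dsum_module:
  assumes "module s" "module s'" shows "module (dsum_scale s s')"
  using assms unfolding module_def dsum_scale_def by (auto simp: algebra_simps)

lemma W_dsum:
  fixes s :: "'r::comm_ring_1 \<Rightarrow> 'm::ab_group_add \<Rightarrow> 'm" and s' :: "'r \<Rightarrow> 'n::ab_group_add \<Rightarrow> 'n"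
  assumes "W s \<subseteq> W s'" shows "W (dsum_scale s s') \<subseteq> W s'"
proof
  fix a assume a: "a \<in> W (dsum_scale s s')"
  show "a \<in> W s'"
  proof (rule ccontr)
    assume "a \<notin> W s'"
    with assms have h1: "range (s a) = UNIV" "range (s' a) = UNIV" by (auto simp: W_def)
    have "range (dsum_scale s s' a) = UNIV"
    proof (rule set_eqI, rule iffI, simp)
      fix p :: "'m \<times> 'n"
      obtain x where "s a x = fst p" using h1(1) by (metis UNIV_I imageE)
      moreover obtain y where "s' a y = snd p" using h1(2) by (metis UNIV_I imageE)
      ultimately have "dsum_scale s s' a (x, y) = p" by (simp add: dsum_scale_def)
      then show "p \<in> range (dsum_scale s s' a)" by (metis rangeI)
    qed
    with a show False by (simp add: W_def)
  qed
qed

lemma part1a: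
  fixes s :: "'r::comm_ring_1 \<Rightarrow> 'm::ab_group_add \<Rightarrow> 'm" and s' :: "'r \<Rightarrow> 'n::ab_group_add \<Rightarrow> 'n"
  assumes "module s" "module s'" "W s \<subseteq> W s'" "dual_A s'"
  shows "dual_A (dsum_scale s s')"
  unfolding dual_A_def
proof (intro allI impI)
  fix I assume I: "fg_ideal I \<and> I \<subseteq> W (dsum_scale s s')"
  interpret D: module "dsum_scale s s'" using dsum_module assms by blast
  interpret M': module s' by fact
  have "I \<subseteq> W s'" using I W_dsum[OF assms(3)] by blast
  with I assms(4) have ne: "ideal_times s' I \<noteq> UNIV" unfolding dual_A_def by blast
  have sub: "D.subspace {p. snd p \<in> ideal_times s' I}"
    unfolding D.subspace_def ideal_times_def
    by (auto simp: dsum_scale_def intro: M'.span_add M'.span_scale M'.span_zero)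
  have "ideal_times (dsum_scale s s') I \<subseteq> {p. snd p \<in> ideal_times s' I}"
    unfolding ideal_times_def
    apply (rule D.span_minimal[OF _ sub[unfolded ideal_times_def]])
    apply (auto simp: dsum_scale_def intro!: M'.span_base) by blast
  moreover obtain y where "y \<notin> ideal_times s' I" using ne by blast
  ultimately have "(0::'m, y) \<notin> ideal_times (dsum_scale s s') I" by auto
  then show "ideal_times (dsum_scale s s') I \<noteq> UNIV" by auto
qed

lemma ci_lift:
  fixes s :: "'r::comm_ring_1 \<Rightarrow> 'm::ab_group_add \<Rightarrow> 'm" and s' :: "'r \<Rightarrow> 'n::ab_group_add \<Rightarrow> 'n"
  assumes "module s" "module s'" "completely_irreducible s' L'"
  shows "completely_irreducible (dsum_scale s s') {p. snd p \<in> L'}"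
proof -
  interpret D: module "dsum_scale s s'" using dsum_module assms by blast
  interpret M': module s' by fact
  have L': "M'.subspace L'" "L' \<noteq> UNIV"
    "\<And>\<L>. (\<forall>Li\<in>\<L>. M'.subspace Li) \<Longrightarrow> L' = \<Inter>\<L> \<Longrightarrow> L' \<in> \<L>"
    using assms(3) unfolding completely_irreducible_def by blast+
  have sub: "D.subspace {p. snd p \<in> L'}"
    using L'(1) unfolding D.subspace_def M'.subspace_def by (auto simp: dsum_scale_def)
  have ne: "{p :: 'm \<times> 'n. snd p \<in> L'} \<noteq> UNIV"
  proof
    assume A: "{p :: 'm \<times> 'n. snd p \<in> L'} = UNIV"
    have "\<forall>y. ((0::'m), y) \<in> {p :: 'm \<times> 'n. snd p \<in> L'}" unfolding A by (rule allI, rule UNIV_I)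
    then show False using L'(2) by auto
  qed
  have key: "{p. snd p \<in> L'} \<in> \<L>" if H: "\<forall>Li\<in>\<L>. D.subspace Li" "{p. snd p \<in> L'} = \<Inter>\<L>" for \<L>
  proof -
    define g where "g Li = {y. ((0::'m), y) \<in> Li}" for Li :: "('m \<times> 'n) set"
    have gs: "\<forall>Li\<in>g ` \<L>. M'.subspace Li"
    proof
      fix K assume "K \<in> g ` \<L>"
      then obtain Li where Li: "Li \<in> \<L>" "K = g Li" by blast
      have S: "D.subspace Li" using H(1) Li(1) by blast
      show "M'.subspace K"
        unfolding M'.subspace_def Li(2) g_def
      proof (intro conjI ballI allI; simp)
        show "(0, 0) \<in> Li" using D.subspace_0[OF S] by (simp add: zero_prod_def)
      next
        fix x y assume "(0, x) \<in> Li" "(0, y) \<in> Li"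
        from D.subspace_add[OF S this] show "(0, x + y) \<in> Li" by simp
      next
        fix c x assume "(0, x) \<in> Li"
        from D.subspace_scale[OF S this, of c] show "(0, s' c x) \<in> Li"
          using module.scale_zero_right[OF assms(1)] by (simp add: dsum_scale_def)
      qed
    qed
    have "L' = \<Inter>(g ` \<L>)"
    proof (rule set_eqI)
      fix y
      have "y \<in> L' \<longleftrightarrow> ((0::'m), y) \<in> {p. snd p \<in> L'}" by simp
      also have "\<dots> \<longleftrightarrow> (0, y) \<in> \<Inter>\<L>" using H(2) by simp
      finally show "y \<in> L' \<longleftrightarrow> y \<in> \<Inter>(g ` \<L>)" by (simp add: g_def)
    qed
    with L'(3)[OF gs] obtain Li where Li: "Li \<in> \<L>" "L' = g Li" by auto
    have S: "D.subspace Li" using H(1) Li(1) by blast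
    have "Li = {p. snd p \<in> L'}"
    proof (rule set_eqI, rule iffI)
      fix p assume p: "p \<in> Li"
      obtain x y where xy: "p = (x, y)" by force
      have "(x, 0) \<in> \<Inter>\<L>" using H(2) M'.subspace_0[OF L'(1)] by (metis mem_Collect_eq snd_conv)
      then have "(x, 0) \<in> Li" using Li(1) by blast
      from D.subspace_diff[OF S p[unfolded xy] this] have "(0, y) \<in> Li" by simp
      then show "p \<in> {p. snd p \<in> L'}" using Li(2) xy by (simp add: g_def)
    next
      fix p assume "p \<in> {p :: 'm \<times> 'n. snd p \<in> L'}"
      then show "p \<in> Li" using H(2) Li(1) by blast
    qed
    with Li(1) show ?thesis by simp
  qed
  show ?thesis unfolding completely_irreducible_def using sub ne key by blast
qed


lemma part1b:
  fixes s :: "'r::comm_ring_1 \<Rightarrow> 'm::ab_group_add \<Rightarrow> 'm" and s' :: "'r \<Rightarrow> 'n::ab_group_add \<Rightarrow> 'n"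
  assumes "module s" "module s'" "W s \<subseteq> W s'" "dual_strong_A s'"
  shows "dual_strong_A (dsum_scale s s')"
  unfolding dual_strong_A_def
proof (intro allI impI)
  fix A assume A: "finite A \<and> A \<noteq> {} \<and> A \<subseteq> W (dsum_scale s s')"
  then have "A \<subseteq> W s'" using W_dsum[OF assms(3)] by (meson order_trans)
  then have "\<exists>L. completely_irreducible s' L \<and> (\<forall>a\<in>A. range (s' a) \<subseteq> L)"
    using A assms(4) unfolding dual_strong_A_def by (elim allE impE) (intro conjI; elim conjE; assumption)
  then obtain L' where L': "completely_irreducible s' L'" "\<forall>a\<in>A. range (s' a) \<subseteq> L'"
    by (elim exE conjE)
  have "\<forall>a\<in>A. range (dsum_scale s s' a) \<subseteq> {p. snd p \<in> L'}"
    using L'(2) by (auto simp: dsum_scale_def image_subset_iff)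
  with ci_lift[OF assms(1,2) L'(1)]
  show "\<exists>L. completely_irreducible (dsum_scale s s') L \<and> (\<forall>a\<in>A. range (dsum_scale s s' a) \<subseteq> L)"
    by (intro exI conjI)
qed

lemma quot_iff:
  fixes t :: "'r::comm_ring_1 \<Rightarrow> 'p::ab_group_add \<Rightarrow> 'p" and u :: "'r \<Rightarrow> 'q::ab_group_add \<Rightarrow> 'q"
    and f :: "'p \<Rightarrow> 'q"
  assumes h: "module_hom t u f" and su: "surj f" and k: "{x. f x = 0} = N"
    and sm: "small_submodule t N" and X: "module.subspace t X"
  shows "f ` X = UNIV \<longleftrightarrow> X = UNIV"
proof
  assume fx: "f ` X = UNIV"
  have "{x + n | x n. x \<in> X \<and> n \<in> N} = UNIV"
  proof (rule set_eqI, rule iffI, simp)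
    fix m
    have "f m \<in> f ` X" using fx by simp
    then obtain x where x: "x \<in> X" "f x = f m" by auto
    have "f (m - x) = 0" using module_hom.diff[OF h] x(2) by simp
    then have "m - x \<in> N" using k by blast
    moreover have "m = x + (m - x)" by simp
    ultimately show "m \<in> {x + n | x n. x \<in> X \<and> n \<in> N}" using x(1) by blast
  qed
  with sm X show "X = UNIV" unfolding small_submodule_def by blast
next
  assume "X = UNIV" then show "f ` X = UNIV" using su by simp
qed

lemma range_eq:
  fixes t :: "'r::comm_ring_1 \<Rightarrow> 'p::ab_group_add \<Rightarrow> 'p" and u :: "'r \<Rightarrow> 'q::ab_group_add \<Rightarrow> 'q"
    and f :: "'p \<Rightarrow> 'q"
  assumes h: "module_hom t u f" and su: "surj f"
  shows "range (u r) = f ` range (t r)"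
proof (rule set_eqI, rule iffI)
  fix y assume "y \<in> range (u r)"
  then obtain z where z: "y = u r z" by blast
  obtain w where "z = f w" using su by (metis surjD)
  then have "y = f (t r w)" using z module_hom.scale[OF h] by simp
  then show "y \<in> f ` range (t r)" by blast
next
  fix y assume "y \<in> f ` range (t r)"
  then obtain w where "y = f (t r w)" by blast
  then have "y = u r (f w)" using module_hom.scale[OF h] by simp
  then show "y \<in> range (u r)" by blast
qed

lemma W_eq:
  fixes t :: "'r::comm_ring_1 \<Rightarrow> 'p::ab_group_add \<Rightarrow> 'p" and u :: "'r \<Rightarrow> 'q::ab_group_add \<Rightarrow> 'q"
    and f :: "'p \<Rightarrow> 'q"
  assumes h: "module_hom t u f" and su: "surj f" and k: "{x. f x = 0} = N"
    and sm: "small_submodule t N"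
  shows "W t = W u"
proof -
  have mt: "module t" using h unfolding module_hom_def by blast
  have "range (u r) = UNIV \<longleftrightarrow> range (t r) = UNIV" for r
    using range_eq[OF h su, of r] quot_iff[OF h su k sm range_subspace[OF mt]] by simp
  then show ?thesis unfolding W_def by blast
qed

lemma it_eq:
  fixes t :: "'r::comm_ring_1 \<Rightarrow> 'p::ab_group_add \<Rightarrow> 'p" and u :: "'r \<Rightarrow> 'q::ab_group_add \<Rightarrow> 'q"
    and f :: "'p \<Rightarrow> 'q"
  assumes h: "module_hom t u f" and su: "surj f"
  shows "f ` ideal_times t I = ideal_times u I"
proof -
  have "f ` {t r x | r x. r \<in> I} = {u r y | r y. r \<in> I}"
  proof (rule set_eqI, rule iffI)
    fix y assume "y \<in> f ` {t r x | r x. r \<in> I}"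
    then obtain r x where "r \<in> I" "y = f (t r x)" by blast
    then show "y \<in> {u r y | r y. r \<in> I}" using module_hom.scale[OF h] by auto
  next
    fix y assume "y \<in> {u r y | r y. r \<in> I}"
    then obtain r z where rz: "r \<in> I" "y = u r z" by blast
    obtain w where "z = f w" using su by (metis surjD)
    then have "y = f (t r w)" using rz module_hom.scale[OF h] by simp
    then show "y \<in> f ` {t r x | r x. r \<in> I}" using rz(1) by blast
  qed
  then show ?thesis unfolding ideal_times_def using module_hom.span_image[OF h, of "{t r x | r x. r \<in> I}"] by simp
qed

lemma part2:
  fixes t :: "'r::comm_ring_1 \<Rightarrow> 'p::ab_group_add \<Rightarrow> 'p" and u :: "'r \<Rightarrow> 'q::ab_group_add \<Rightarrow> 'q"
    and f :: "'p \<Rightarrow> 'q"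
  assumes h: "module_hom t u f" and su: "surj f" and k: "{x. f x = 0} = N"
    and sm: "small_submodule t N"
  shows "(dual_A t \<longleftrightarrow> dual_A u) \<and> (secondal t \<longleftrightarrow> secondal u)"
proof
  have mt: "module t" using h unfolding module_hom_def by blast
  have WE: "W t = W u" by (rule W_eq[OF h su k sm])
  have "ideal_times t I = UNIV \<longleftrightarrow> ideal_times u I = UNIV" for I
    using quot_iff[OF h su k sm, of "ideal_times t I"] it_eq[OF h su, of I]
      module.subspace_span[OF mt] unfolding ideal_times_def by simp
  then show "dual_A t \<longleftrightarrow> dual_A u" unfolding dual_A_def WE by simp
  have z: "(UNIV :: 'p set) = {0} \<longleftrightarrow> (UNIV :: 'q set) = {0}"
  proof
    assume A: "(UNIV :: 'p set) = {0}"
    have "f ` (UNIV :: 'p set) = {0}" by (subst A) (simp add: module_hom.zero[OF h])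
    then show "(UNIV :: 'q set) = {0}" using su by simp
  next
    assume a: "(UNIV :: 'q set) = {0}"
    have "f ` {0} = UNIV" using a module_hom.zero[OF h] by simp
    then show "(UNIV :: 'p set) = {0}"
      using quot_iff[OF h su k sm module.subspace_single_0[OF mt]] by simp
  qed
  show "secondal t \<longleftrightarrow> secondal u" unfolding secondal_def WE z by simp
qed

theorem theorem2p12:
  fixes s :: "'r::comm_ring_1 \<Rightarrow> 'm::ab_group_add \<Rightarrow> 'm"
    and s' :: "'r \<Rightarrow> 'n::ab_group_add \<Rightarrow> 'n"
    and t :: "'r \<Rightarrow> 'p::ab_group_add \<Rightarrow> 'p"
    and u :: "'r \<Rightarrow> 'q::ab_group_add \<Rightarrow> 'q"
    and f :: "'p \<Rightarrow> 'q"
    and N :: "'p set"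
  shows "(module s \<and> module s' \<and> W s \<subseteq> W s' \<longrightarrow>
            (dual_A s' \<longrightarrow> dual_A (dsum_scale s s')) \<and>
            (dual_strong_A s' \<longrightarrow> dual_strong_A (dsum_scale s s')))
       \<and> (module t \<and> module u \<and> module_hom t u f \<and> surj f \<and> {x. f x = 0} = N \<and>
            small_submodule t N \<longrightarrow>
            (dual_A t \<longleftrightarrow> dual_A u) \<and> (secondal t \<longleftrightarrow> secondal u))"
proof (intro conjI impI)
  assume "module s \<and> module s' \<and> W s \<subseteq> W s'"
  then have a: "module s" "module s'" "W s \<subseteq> W s'" by auto
  show "dual_A s' \<Longrightarrow> dual_A (dsum_scale s s')" by (rule part1a[OF a])
  show "dual_strong_A s' \<Longrightarrow> dual_strong_A (dsum_scale s s')" by (rule part1b[OF a])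
next
  assume "module t \<and> module u \<and> module_hom t u f \<and> surj f \<and> {x. f x = 0} = N \<and> small_submodule t N"
  then have a: "module_hom t u f" "surj f" "{x. f x = 0} = N" "small_submodule t N" by auto
  show "dual_A t \<longleftrightarrow> dual_A u" using part2[OF a] by (rule conjunct1)
  show "secondal t \<longleftrightarrow> secondal u" using part2[OF a] by (rule conjunct2)
qed

end
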